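(* For every $w\in H^1(0,T)$, $\|\mathcal P_\tau w\|_{C^0[0,T]}\le C\|w\|_{C^0[0,T]}$, where $C>0$ is independent of the partition (in particular of the time steps).
   Context: Let $T>0$, $q\ge1$ an integer, and $0=t_0<t_1<\dots<t_N=T$ a partition of $(0,T)$ with $I_n=(t_{n-1},t_n)$. Let $\mathcal V_\tau^q=\{v\in C^0[0,T]: v|_{I_n}\in\mathbb P^q(I_n),\ n=1,\dots,N\}$. The projection $\mathcal P_\tau:H^1(0,T)\to\mathcal V_\tau^q$ is defined for $w\in H^1(0,T)$ as the unique element of $\mathcal V_\tau^q$ with $\mathcal P_\tau w(0)=w(0)$ and $\int_{I_n}((\mathcal P_\tau w)'-w')\,p_{q-1}\,dt=0$ for all $p_{q-1}\in\mathbb P^{q-1}(I_n)$, $n=1,\dots,N$. The constant $C$ may depend on $q$. *)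

theory Defs
  imports "HOL-Analysis.Analysis" "HOL-Computational_Algebra.Polynomial"
begin

definition is_partition :: "real \<Rightarrow> nat \<Rightarrow> (nat \<Rightarrow> real) \<Rightarrow> bool" where
  "is_partition T N t \<longleftrightarrow> N \<ge> 1 \<and> t 0 = 0 \<and> t N = T \<and> (\<forall>n<N. t n < t (Suc n))"

text \<open>g is the (weak) derivative of w on (0,T): g in L^2(0,T) and
  w(x) = w(0) + int_0^x g for x in [0,T] (continuous representative of an H^1 function).\<close>
definition weak_deriv_on :: "real \<Rightarrow> (real \<Rightarrow> real) \<Rightarrow> (real \<Rightarrow> real) \<Rightarrow> bool" where
  "weak_deriv_on T w g \<longleftrightarrow>
     g absolutely_integrable_on {0..T} \<and> (\<lambda>s. (g s)\<^sup>2) integrable_on {0..T} \<and>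
     (\<forall>x\<in>{0..T}. w x = w 0 + integral {0..x} g)"

definition H1 :: "real \<Rightarrow> (real \<Rightarrow> real) \<Rightarrow> bool" where
  "H1 T w \<longleftrightarrow> (\<exists>g. weak_deriv_on T w g)"

definition Vtau :: "nat \<Rightarrow> real \<Rightarrow> nat \<Rightarrow> (nat \<Rightarrow> real) \<Rightarrow> (real \<Rightarrow> real) set" where
  "Vtau q T N t = {v. continuous_on {0..T} v \<and>
     (\<forall>n\<in>{1..N}. \<exists>p :: real poly. degree p \<le> q \<and> (\<forall>s\<in>{t (n - 1)..t n}. v s = poly p s))}"

text \<open>The defining conditions of P_tau w; v is normalised to 0 outside [0,T]
  so that the element is unique as a function on the reals.\<close>
definition is_Ptau :: "nat \<Rightarrow> real \<Rightarrow> nat \<Rightarrow> (nat \<Rightarrow> real) \<Rightarrow> (real \<Rightarrow> real) \<Rightarrow> (real \<Rightarrow> real) \<Rightarrow> bool" where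
  "is_Ptau q T N t w v \<longleftrightarrow>
     v \<in> Vtau q T N t \<and> (\<forall>s. s \<notin> {0..T} \<longrightarrow> v s = 0) \<and> v 0 = w 0 \<and>
     (\<forall>g. weak_deriv_on T w g \<longrightarrow>
        (\<forall>n\<in>{1..N}. \<forall>r :: real poly. degree r \<le> q - 1 \<longrightarrow>
           integral {t (n - 1)..t n} (\<lambda>s. (deriv v s - g s) * poly r s) = 0))"

definition Ptau :: "nat \<Rightarrow> real \<Rightarrow> nat \<Rightarrow> (nat \<Rightarrow> real) \<Rightarrow> (real \<Rightarrow> real) \<Rightarrow> (real \<Rightarrow> real)" where
  "Ptau q T N t w = (THE v. is_Ptau q T N t w v)"

definition C0norm :: "real \<Rightarrow> (real \<Rightarrow> real) \<Rightarrow> real" where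
  "C0norm T f = (SUP s\<in>{0..T}. \<bar>f s\<bar>)"

end

theory Submission
  imports Defs
begin
definition pint :: "real poly \<Rightarrow> real poly" where
  "pint p = (\<Sum>i\<le>degree p. monom (coeff p i / real (Suc i)) (Suc i))"

lemma pderiv_sum': "pderiv (sum f A) = (\<Sum>x\<in>A. pderiv (f x))"
  using higher_pderiv_sum[of 1] by simp

lemma pderiv_pint: "pderiv (pint p) = p"
proof -
  have "pderiv (pint p) = (\<Sum>i\<le>degree p. monom (coeff p i) i)"
    unfolding pint_def pderiv_sum' pderiv_monom by simp
  then show ?thesis using poly_as_sum_of_monoms by simp
qed

lemma ftc_poly:
  fixes p P :: "real poly"
  assumes "a \<le> b" "pderiv P = p"
  shows "((\<lambda>x. poly p x) has_integral (poly P b - poly P a)) {a..b}"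
proof -
  have "((\<lambda>x. poly p x) has_integral ((\<lambda>x. poly P x) b - (\<lambda>x. poly P x) a)) {a..b}"
  proof (rule fundamental_theorem_of_calculus[OF assms(1)])
  fix x assume "x \<in> {a..b}"
  have "((\<lambda>x. poly P x) has_real_derivative poly p x) (at x within {a..b})"
    using poly_DERIV[of P x] assms(2) has_field_derivative_at_within by blast
  then show "((\<lambda>x. poly P x) has_vector_derivative poly p x) (at x within {a..b})"
    by (simp add: has_real_derivative_iff_has_vector_derivative)
  qed
  then show ?thesis by simp
qed

lemma integral_poly:
  fixes p P :: "real poly"
  assumes "a \<le> b" "pderiv P = p"
  shows "integral {a..b} (\<lambda>x. poly p x) = poly P b - poly P a"
  using ftc_poly[OF assms] by (rule integral_unique)

lemma poly_integrable [simp]: "(\<lambda>x::real. poly p x) integrable_on {a..b}"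
proof -
  have "continuous_on {a..b} (\<lambda>x. poly p x)" by (rule continuous_on_poly[OF continuous_on_id])
  then show ?thesis by (rule integrable_continuous_interval)
qed

lemma poly_sq_integral_zero:
  fixes p :: "real poly"
  assumes "a < b" "integral {a..b} (\<lambda>x. poly p x * poly p x) = 0"
  shows "p = 0"
proof (rule ccontr)
  assume "p \<noteq> 0"
  have z: "poly p x * poly p x = 0" if "x \<in> {a..b}" for x
  proof -
    have i: "((\<lambda>x. poly (p*p) x) has_integral integral {a..b} (\<lambda>x. poly (p*p) x)) {a..b}"
      by (rule integrable_integral) (rule poly_integrable)
    have "integral {a..b} (\<lambda>x. poly (p*p) x) = 0" using assms(2) by simp
    with i have hi: "((\<lambda>x. poly (p*p) x) has_integral 0) (cbox a b)" by simp
    have "poly (p*p) x = 0"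
    proof (rule has_integral_0_cbox_imp_0[where f="\<lambda>x. poly (p*p) x", OF _ _ hi])
      show "continuous_on (cbox a b) (\<lambda>x. poly (p * p) x)" by (rule continuous_on_poly[OF continuous_on_id])
      show "box a b \<noteq> {}" using assms(1) by simp
      show "x \<in> cbox a b" using that by simp
    qed simp
    then show ?thesis by simp
  qed
  have "{a..b} \<subseteq> {x. poly p x = 0}" using z by auto
  moreover have "infinite {a..b}" using assms(1) by simp
  ultimately have "infinite {x. poly p x = 0}" using finite_subset by blast
  with poly_roots_finite[OF \<open>p \<noteq> 0\<close>] show False by simp
qed

lemma poly_sq_integral_pos:
  fixes p :: "real poly"
  assumes "a < b" "p \<noteq> 0"
  shows "integral {a..b} (\<lambda>x. poly p x * poly p x) > 0"
proof -
  have "integral {a..b} (\<lambda>x. poly p x * poly p x) \<ge> 0"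
  proof (rule integral_nonneg)
    have "(\<lambda>x. poly (p*p) x) integrable_on {a..b}" by (rule poly_integrable)
    then show "(\<lambda>x. poly p x * poly p x) integrable_on {a..b}" by simp
  qed auto
  moreover have "integral {a..b} (\<lambda>x. poly p x * poly p x) \<noteq> 0"
    using poly_sq_integral_zero[OF assms(1)] assms(2) by blast
  ultimately show ?thesis by linarith
qed

definition lin :: "real \<Rightarrow> real \<Rightarrow> real poly" where
  "lin a h = [:- a / h, 1 / h:]"

lemma poly_lin: "h > 0 \<Longrightarrow> poly (lin a h) x = (x - a) / h"
  by (simp add: lin_def diff_divide_distrib)

lemma pderiv_lin: "pderiv (lin a h) = [:1/h:]"
  by (simp add: lin_def pderiv_pCons)

lemma degree_lin: "h > 0 \<Longrightarrow> degree (lin a h) = 1"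
  by (simp add: lin_def)

lemma integral_scaled:
  fixes p :: "real poly"
  assumes "h > 0"
  shows "integral {a..a+h} (\<lambda>x. poly (pcompose p (lin a h)) x) = h * integral {0..1} (\<lambda>x. poly p x)"
proof -
  have d: "pderiv (smult h (pcompose (pint p) (lin a h))) = pcompose p (lin a h)"
    using assms by (simp add: pderiv_smult pderiv_pcompose pderiv_pint pderiv_lin)
  have "integral {a..a+h} (\<lambda>x. poly (pcompose p (lin a h)) x)
      = h * (poly (pint p) 1 - poly (pint p) 0)"
  proof -
    have 1: "poly (lin a h) (a+h) = 1" "poly (lin a h) a = 0" using assms by (simp_all add: poly_lin)
    show ?thesis
      using integral_poly[OF _ d, of a "a+h"] assms by (simp add: poly_pcompose 1 right_diff_distrib)
  qed
  also have "\<dots> = h * integral {0..1} (\<lambda>x. poly p x)"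
    using integral_poly[of 0 1 "pint p" p] by (simp add: pderiv_pint)
  finally show ?thesis .
qed

definition Iint :: "real \<Rightarrow> real \<Rightarrow> real poly \<Rightarrow> real" where
  "Iint a b p = integral {a..b} (\<lambda>x. poly p x)"

abbreviation I01 :: "real poly \<Rightarrow> real" where "I01 \<equiv> Iint 0 1"

lemma Iint_add: "Iint a b (p + q) = Iint a b p + Iint a b q"
proof -
  have e: "poly (p + q) = (\<lambda>x. poly p x + poly q x)" by (simp add: fun_eq_iff)
  show ?thesis unfolding Iint_def e by (rule integral_add) auto
qed

lemma Iint_smult: "Iint a b (smult c p) = c * Iint a b p"
proof -
  have e: "poly (smult c p) = (\<lambda>x. c * poly p x)" by (simp add: fun_eq_iff)
  show ?thesis unfolding Iint_def e by (rule integral_mult_right)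
qed

lemma Iint_diff: "Iint a b (p - q) = Iint a b p - Iint a b q"
proof -
  have e: "poly (p - q) = (\<lambda>x. poly p x - poly q x)" by (simp add: fun_eq_iff)
  show ?thesis unfolding Iint_def e by (rule integral_diff) auto
qed

lemma Iint_zero [simp]: "Iint a b 0 = 0"
proof -
  have e: "poly 0 = (\<lambda>x::real. 0)" by (simp add: fun_eq_iff)
  show ?thesis unfolding Iint_def e by simp
qed

lemma Iint_sum: "finite A \<Longrightarrow> Iint a b (sum f A) = (\<Sum>x\<in>A. Iint a b (f x))"
  by (induction A rule: finite_induct) (auto simp: Iint_add)

lemma degree_eqI':
  fixes p :: "real poly"
  assumes "coeff p n \<noteq> 0" "\<And>i. i > n \<Longrightarrow> coeff p i = 0"
  shows "degree p = n"
  using assms le_degree degree_le by (metis le_antisym)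

lemma gram_schmidt:
  "\<exists>B. (\<forall>k<n. degree (B k) = k \<and> B k \<noteq> 0) \<and> (\<forall>j<n. \<forall>k<n. j \<noteq> k \<longrightarrow> I01 (B j * B k) = 0)"
proof (induction n)
  case 0
  then show ?case by simp
next
  case (Suc n)
  then obtain B where Od: "\<And>k. k<n \<Longrightarrow> degree (B k) = k \<and> B k \<noteq> 0"
    and Oo: "\<And>j k. j<n \<Longrightarrow> k<n \<Longrightarrow> j \<noteq> k \<Longrightarrow> I01 (B j * B k) = 0" by blast
  define c where "c k = I01 (monom 1 n * B k) / I01 (B k * B k)" for k
  define S where "S = (\<Sum>k<n. smult (c k) (B k))"
  define On where "On = monom 1 n - S"
  have pos: "I01 (B k * B k) > 0" if "k < n" for k
    using poly_sq_integral_pos[of 0 1 "B k"] Od[OF that] by (simp add: Iint_def)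
  have cS: "coeff S i = 0" if "i \<ge> n" for i
  proof -
    have "coeff (smult (c k) (B k)) i = 0" if "k < n" for k
      using Od[OF that] \<open>i \<ge> n\<close> that by (simp add: coeff_eq_0)
    then show ?thesis unfolding S_def coeff_sum by (intro sum.neutral) auto
  qed
  have degOn: "degree On = n"
    by (rule degree_eqI') (auto simp: On_def cS coeff_monom)
  have OnNZ: "On \<noteq> 0"
  proof
    assume "On = 0"
    then have "coeff On n = 0" by simp
    then show False by (simp add: On_def cS coeff_monom)
  qed
  have orth: "I01 (On * B j) = 0" if "j < n" for j
  proof -
    have "I01 (S * B j) = (\<Sum>k<n. c k * I01 (B k * B j))"
      unfolding S_def sum_distrib_right by (simp add: Iint_sum Iint_smult)
    also have "\<dots> = (\<Sum>k<n. if k = j then c j * I01 (B j * B j) else 0)"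
      by (rule sum.cong) (auto simp: Oo that)
    also have "\<dots> = c j * I01 (B j * B j)" using that by simp
    also have "\<dots> = I01 (monom 1 n * B j)" using pos[OF that] by (simp add: c_def)
    finally show ?thesis by (simp add: On_def left_diff_distrib Iint_diff)
  qed
  define B' where "B' = B(n := On)"
  show ?case
  proof (intro exI[of _ B'] conjI allI impI)
    fix k assume "k < Suc n"
    then show "degree (B' k) = k" "B' k \<noteq> 0"
      using Od degOn OnNZ by (auto simp: B'_def less_Suc_eq)
  next
    fix j k assume "j < Suc n" "k < Suc n" "j \<noteq> k"
    then show "I01 (B' j * B' k) = 0"
      using Oo orth by (auto simp: B'_def less_Suc_eq mult.commute)
  qed
qed

lemma span_lemma:
  fixes P :: "nat \<Rightarrow> real poly"
  assumes "\<And>k. k < m \<Longrightarrow> degree (P k) = k \<and> P k \<noteq> 0"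
    and "\<And>i. i \<ge> m \<Longrightarrow> coeff r i = 0"
  shows "\<exists>c. r = (\<Sum>k<m. smult (c k) (P k))"
  using assms
proof (induction m arbitrary: r)
  case 0
  then have "r = 0" by (intro poly_eqI) simp
  then show ?case by simp
next
  case (Suc m)
  have dm: "degree (P m) = m" and nz: "P m \<noteq> 0" using Suc.prems(1)[of m] by auto
  have lc: "coeff (P m) m \<noteq> 0" using dm nz by (metis leading_coeff_0_iff)
  define d where "d = coeff r m / coeff (P m) m"
  define r' where "r' = r - smult d (P m)"
  have "coeff r' i = 0" if "i \<ge> m" for i
  proof (cases "i = m")
    case True
    then show ?thesis using lc by (simp add: r'_def d_def)
  next
    case False
    then have "i > m" using that by simp
    then show ?thesis using Suc.prems(2)[of i] dm by (simp add: r'_def coeff_eq_0)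
  qed
  then obtain c where c: "r' = (\<Sum>k<m. smult (c k) (P k))"
    using Suc.IH[of r'] Suc.prems(1) by auto
  have "r = (\<Sum>k<Suc m. smult ((c(m := d)) k) (P k))"
    using c by (simp add: r'_def algebra_simps)
  then show ?case by blast
qed

locale ortho =
  fixes q :: nat and B :: "nat \<Rightarrow> real poly" and S D :: "nat \<Rightarrow> real"
  assumes q1: "q \<ge> 1"
    and Bdeg: "\<And>k. k < q \<Longrightarrow> degree (B k) = k"
    and Bnz: "\<And>k. k < q \<Longrightarrow> B k \<noteq> 0"
    and Borth: "\<And>j k. j < q \<Longrightarrow> k < q \<Longrightarrow> j \<noteq> k \<Longrightarrow> I01 (B j * B k) = 0"
    and Sb: "\<And>k x. x \<in> {0..1} \<Longrightarrow> \<bar>poly (B k) x\<bar> \<le> S k"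
    and Db: "\<And>k x. x \<in> {0..1} \<Longrightarrow> \<bar>poly (pderiv (B k)) x\<bar> \<le> D k"
begin

definition Nrm :: "nat \<Rightarrow> real" where "Nrm k = I01 (B k * B k)"

lemma Nrm_pos: "k < q \<Longrightarrow> Nrm k > 0"
  using poly_sq_integral_pos[of 0 1 "B k"] Bnz[of k] by (simp add: Nrm_def Iint_def)

definition Bab :: "real \<Rightarrow> real \<Rightarrow> nat \<Rightarrow> real poly" where
  "Bab a h k = pcompose (B k) (lin a h)"

lemma Bab_deg: "h > 0 \<Longrightarrow> k < q \<Longrightarrow> degree (Bab a h k) = k \<and> Bab a h k \<noteq> 0"
  using Bdeg[of k] Bnz[of k] degree_lin[of h a] pcompose_eq_0[of "B k" "lin a h"]
  by (auto simp: Bab_def degree_pcompose)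

lemma Bab_orth:
  assumes "h > 0" "j < q" "k < q"
  shows "Iint a (a+h) (Bab a h j * Bab a h k) = (if j = k then h * Nrm k else 0)"
proof -
  have "Iint a (a+h) (Bab a h j * Bab a h k) = h * I01 (B j * B k)"
    using integral_scaled[OF assms(1), where p="B j * B k" and a=a]
    by (simp add: Bab_def pcompose_mult Iint_def)
  then show ?thesis using Borth[OF assms(2,3)] by (simp add: Nrm_def)
qed

lemma expansion:
  assumes "h > 0" "\<And>i. i \<ge> q \<Longrightarrow> coeff r i = 0"
  shows "r = (\<Sum>k<q. smult (Iint a (a+h) (r * Bab a h k) / (h * Nrm k)) (Bab a h k))"
proof -
  obtain c where c: "r = (\<Sum>k<q. smult (c k) (Bab a h k))"
    using span_lemma[of q "Bab a h" r] Bab_deg[OF assms(1)] assms(2) by blast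
  have "Iint a (a+h) (r * Bab a h j) / (h * Nrm j) = c j" if "j < q" for j
  proof -
    have "Iint a (a+h) (r * Bab a h j) = (\<Sum>k<q. c k * Iint a (a+h) (Bab a h k * Bab a h j))"
      by (subst c) (simp add: sum_distrib_right Iint_sum Iint_smult)
    also have "\<dots> = (\<Sum>k<q. if k = j then c j * (h * Nrm j) else 0)"
      by (rule sum.cong) (auto simp: Bab_orth[OF assms(1)] that)
    also have "\<dots> = c j * (h * Nrm j)" using that by simp
    finally show ?thesis using Nrm_pos[OF that] assms(1) by simp
  qed
  then show ?thesis by (subst c) (intro sum.cong; simp)
qed

end

lemma local_unique:
  fixes Q1 Q2 :: "real poly"
  assumes "a < b" "\<And>i. i \<ge> q \<Longrightarrow> coeff Q1 i = 0" "\<And>i. i \<ge> q \<Longrightarrow> coeff Q2 i = 0"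
    and "\<And>r. (\<And>i. i \<ge> q \<Longrightarrow> coeff r i = 0) \<Longrightarrow> Iint a b (Q1 * r) = Iint a b (Q2 * r)"
  shows "Q1 = Q2"
proof -
  have "Iint a b (Q1 * (Q1 - Q2)) = Iint a b (Q2 * (Q1 - Q2))"
    by (rule assms(4)) (simp add: assms(2,3))
  then have "Iint a b ((Q1 - Q2) * (Q1 - Q2)) = 0"
    by (simp add: left_diff_distrib Iint_diff del: mult_diff_mult)
  then have "integral {a..b} (\<lambda>x. poly (Q1 - Q2) x * poly (Q1 - Q2) x) = 0"
    by (simp add: Iint_def)
  then have "Q1 - Q2 = 0" by (rule poly_sq_integral_zero[OF assms(1)])
  then show ?thesis by simp
qed

context ortho
begin

lemma S_nonneg: "S k \<ge> 0" using Sb[of 0 k] by simp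
lemma D_nonneg: "D k \<ge> 0" using Db[of 0 k] by simp

lemma Bab_bounds:
  assumes "h > 0" "u \<in> {a..a+h}"
  shows "\<bar>poly (Bab a h k) u\<bar> \<le> S k" "\<bar>poly (pderiv (Bab a h k)) u\<bar> \<le> D k / h"
proof -
  have x: "(u - a) / h \<in> {0..1}" using assms by auto
  show "\<bar>poly (Bab a h k) u\<bar> \<le> S k"
    using Sb[OF x, of k] assms(1) by (simp add: Bab_def poly_pcompose poly_lin)
  have "poly (pderiv (Bab a h k)) u = poly (pderiv (B k)) ((u - a) / h) / h"
    using assms(1) by (simp add: Bab_def pderiv_pcompose pderiv_lin poly_pcompose poly_lin)
  then show "\<bar>poly (pderiv (Bab a h k)) u\<bar> \<le> D k / h"
    using Db[OF x, of k] assms(1) by (simp add: divide_right_mono)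
qed

lemma coeff_Bab_sum:
  assumes "h > 0" "i \<ge> q"
  shows "coeff (\<Sum>k<q. smult (c k) (Bab a h k)) i = 0"
proof -
  have "coeff (smult (c k) (Bab a h k)) i = 0" if "k < q" for k
    using Bab_deg[OF assms(1) that, of a] assms(2) that by (simp add: coeff_eq_0)
  then show ?thesis unfolding coeff_sum by (intro sum.neutral) auto
qed

lemma local_exist:
  fixes J :: "real poly \<Rightarrow> real"
  assumes h: "h > 0"
    and Jadd: "\<And>p r. J (p + r) = J p + J r" and Jsm: "\<And>c p. J (smult c p) = c * J p"
  shows "\<exists>Q. (\<forall>i\<ge>q. coeff Q i = 0) \<and>
     (\<forall>r. (\<forall>i\<ge>q. coeff r i = 0) \<longrightarrow> Iint a (a+h) (Q * r) = J r)"
proof -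
  have J0: "J 0 = 0" using Jsm[of 0 0] by simp
  have Jsum: "J (sum f A) = (\<Sum>x\<in>A. J (f x))" if "finite A" for f and A :: "nat set"
    using that by (induction A rule: finite_induct) (auto simp: J0 Jadd)
  define Q where "Q = (\<Sum>k<q. smult (J (Bab a h k) / (h * Nrm k)) (Bab a h k))"
  have cQ: "\<forall>i\<ge>q. coeff Q i = 0" unfolding Q_def by (auto intro: coeff_Bab_sum[OF h])
  have QB: "Iint a (a+h) (Q * Bab a h j) = J (Bab a h j)" if "j < q" for j
  proof -
    have "Iint a (a+h) (Q * Bab a h j)
       = (\<Sum>k<q. J (Bab a h k) / (h * Nrm k) * Iint a (a+h) (Bab a h k * Bab a h j))"
      unfolding Q_def by (simp add: sum_distrib_right Iint_sum Iint_smult)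
    also have "\<dots> = (\<Sum>k<q. if k = j then J (Bab a h j) / (h * Nrm j) * (h * Nrm j) else 0)"
      by (rule sum.cong) (auto simp: Bab_orth[OF h] that)
    also have "\<dots> = J (Bab a h j)" using that Nrm_pos[OF that] h by simp
    finally show ?thesis .
  qed
  have "Iint a (a+h) (Q * r) = J r" if r: "\<forall>i\<ge>q. coeff r i = 0" for r
  proof -
    define d where "d k = Iint a (a+h) (r * Bab a h k) / (h * Nrm k)" for k
    have re: "r = (\<Sum>k<q. smult (d k) (Bab a h k))"
      unfolding d_def using expansion[OF h, of r a] r by blast
    have "Iint a (a+h) (Q * r) = (\<Sum>k<q. d k * Iint a (a+h) (Q * Bab a h k))"
      by (subst re) (simp add: sum_distrib_left Iint_sum Iint_smult mult.commute)
    also have "\<dots> = (\<Sum>k<q. d k * J (Bab a h k))"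
      by (rule sum.cong) (auto simp: QB)
    also have "\<dots> = J (\<Sum>k<q. smult (d k) (Bab a h k))"
      by (simp add: Jsum Jsm)
    also have "\<dots> = J r" using re by simp
    finally show ?thesis .
  qed
  with cQ show ?thesis by blast
qed

lemma local_bound:
  assumes h: "h > 0" and cQ: "\<And>i. i \<ge> q \<Longrightarrow> coeff Q i = 0"
    and JB: "\<And>k. k < q \<Longrightarrow> \<bar>Iint a (a+h) (Q * Bab a h k)\<bar> \<le> M * (S k + D k)"
    and s: "s \<in> {a..a+h}"
  shows "\<bar>Iint a s Q\<bar> \<le> M * (\<Sum>k<q. (S k + D k) * S k / Nrm k)"
proof -
  define c where "c k = Iint a (a+h) (Q * Bab a h k) / (h * Nrm k)" for k
  have Qe: "Q = (\<Sum>k<q. smult (c k) (Bab a h k))"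
    unfolding c_def using expansion[OF h, of Q a] cQ by blast
  have bI: "\<bar>Iint a s (Bab a h k)\<bar> \<le> S k * h" for k
  proof -
    have "\<bar>Iint a s (Bab a h k)\<bar> \<le> S k * (s - a)"
      unfolding Iint_def
      using integral_bound[of a s "\<lambda>x. poly (Bab a h k) x" "S k"] s Bab_bounds(1)[OF h, of _ a k]
      by (auto intro: continuous_on_poly[OF continuous_on_id])
    also have "\<dots> \<le> S k * h" using s S_nonneg[of k] by (intro mult_left_mono) auto
    finally show ?thesis .
  qed
  have tm: "\<bar>c k * Iint a s (Bab a h k)\<bar> \<le> M * ((S k + D k) * S k / Nrm k)" if "k < q" for k
  proof -
    have Np: "Nrm k > 0" using Nrm_pos[OF that] .
    have "\<bar>c k\<bar> \<le> M * (S k + D k) / (h * Nrm k)"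
      unfolding c_def using JB[OF that] h Np by (simp add: abs_div divide_right_mono)
    then have "\<bar>c k * Iint a s (Bab a h k)\<bar> \<le> (M * (S k + D k) / (h * Nrm k)) * (S k * h)"
      unfolding abs_mult by (intro mult_mono bI) auto
    also have "\<dots> = M * ((S k + D k) * S k / Nrm k)" using h Np by (simp add: field_simps)
    finally show ?thesis .
  qed
  have "Iint a s Q = (\<Sum>k<q. c k * Iint a s (Bab a h k))"
    by (subst Qe) (simp add: Iint_sum Iint_smult)
  then have "\<bar>Iint a s Q\<bar> \<le> (\<Sum>k<q. \<bar>c k * Iint a s (Bab a h k)\<bar>)"
    by (simp add: sum_abs)
  also have "\<dots> \<le> (\<Sum>k<q. M * ((S k + D k) * S k / Nrm k))"
    by (rule sum_mono) (rule tm, simp)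
  also have "\<dots> = M * (\<Sum>k<q. (S k + D k) * S k / Nrm k)" by (simp add: sum_distrib_left)
  finally show ?thesis .
qed

end

lemma poly_bounded: "\<exists>L\<ge>0. \<forall>u\<in>{a..b}. \<bar>poly p u\<bar> \<le> (L::real)"
proof -
  have "bounded ((\<lambda>u. poly p u) ` {a..b::real})"
    by (intro compact_imp_bounded compact_continuous_image continuous_on_poly continuous_on_id) auto
  then obtain L where "L > 0" "\<And>u. u \<in> {a..b} \<Longrightarrow> norm (poly p u) \<le> L"
    by (auto simp: bounded_pos)
  then show ?thesis by (intro exI[of _ L]) auto
qed

lemma absint_mult_cont:
  fixes f g :: "real \<Rightarrow> real"
  assumes "g absolutely_integrable_on {a..b}" "continuous_on {a..b} f"
  shows "(\<lambda>s. g s * f s) absolutely_integrable_on {a..b}"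
proof -
  have "(\<lambda>s. f s * g s) absolutely_integrable_on {a..b}"
  proof (rule absolutely_integrable_bounded_measurable_product_real)
    show "f \<in> borel_measurable (lebesgue_on {a..b})"
      by (rule continuous_imp_measurable_on_sets_lebesgue[OF assms(2)]) simp
    show "bounded (f ` {a..b})"
      by (intro compact_imp_bounded compact_continuous_image assms(2)) auto
  qed (use assms in auto)
  then show ?thesis by (simp add: mult.commute)
qed

lemma deriv0I:
  fixes f :: "real \<Rightarrow> real"
  assumes "\<And>e. e > 0 \<Longrightarrow> \<exists>d>0. \<forall>y\<in>S. \<bar>y - x\<bar> < d \<longrightarrow> \<bar>f y - f x\<bar> \<le> e * \<bar>y - x\<bar>"
  shows "(f has_field_derivative 0) (at x within S)"
  unfolding has_field_derivative_def has_derivative_within_alt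
  using assms by (simp add: bounded_linear_mult_right)

lemma integral_same [simp]: "integral {a..a::real} f = 0"
  by (metis box_real(2) integral_refl)

lemma ibp:
  fixes g w :: "real \<Rightarrow> real" and r :: "real poly"
  assumes ab: "a \<le> b" and g: "g absolutely_integrable_on {a..b}"
    and w: "\<And>x. x \<in> {a..b} \<Longrightarrow> w x = w a + integral {a..x} g"
  shows "integral {a..b} (\<lambda>s. g s * poly r s) =
         poly r b * (w b - w a) - integral {a..b} (\<lambda>u. poly (pderiv r) u * (w u - w a))"
proof -
  define W where "W x = integral {a..x} g" for x
  have Wd: "w x - w a = W x" if "x \<in> {a..b}" for x using w[OF that] W_def by simp
  have gi: "g integrable_on {a..b}" using g absolutely_integrable_on_def by blast
  have gai: "(\<lambda>s. \<bar>g s\<bar>) integrable_on {a..b}" using g unfolding absolutely_integrable_on_def real_norm_def by blast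
  have Wc: "continuous_on {a..b} W" unfolding W_def by (rule indefinite_integral_continuous_1[OF gi])
  define G where "G x = integral {a..x} (\<lambda>s. \<bar>g s\<bar>)" for x
  have Gc: "continuous_on {a..b} G" unfolding G_def by (rule indefinite_integral_continuous_1[OF gai])
  define r' where "r' = pderiv r"
  obtain L where L0: "L \<ge> 0" and L: "\<And>u. u \<in> {a..b} \<Longrightarrow> \<bar>poly r' u\<bar> \<le> L"
    using poly_bounded by blast
  have gr: "(\<lambda>s. g s * poly r s) integrable_on {a..b}"
    using absint_mult_cont[OF g continuous_on_poly[OF continuous_on_id]] absolutely_integrable_on_def by blast
  have rW: "(\<lambda>u. poly r' u * W u) integrable_on {a..b}"
    by (intro integrable_continuous_interval continuous_intros Wc continuous_on_poly[OF continuous_on_id])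
  define \<Phi> where "\<Phi> x = integral {a..x} (\<lambda>s. g s * poly r s) - poly r x * W x
                          + integral {a..x} (\<lambda>u. poly r' u * W u)" for x
  have sub: "{x..y} \<subseteq> {a..b}" if "x \<in> {a..b}" "y \<in> {a..b}" for x y using that by auto
  have core: "\<bar>\<Phi> y - \<Phi> x\<bar> \<le> (y - x) * (L * (G y - G x) + L * \<eta>)"
    if xy: "x \<le> y" "x \<in> {a..b}" "y \<in> {a..b}" and eta: "\<And>u. u \<in> {x..y} \<Longrightarrow> \<bar>W u - W x\<bar> \<le> \<eta>" for x y \<eta>
  proof -
    have sxy: "{x..y} \<subseteq> {a..b}" using sub xy by blast
    have gr': "(\<lambda>s. g s * poly r s) integrable_on {a..y}" using gr xy by (auto intro: integrable_on_subinterval)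
    have rW': "(\<lambda>u. poly r' u * W u) integrable_on {a..y}" using rW xy by (auto intro: integrable_on_subinterval)
    have gi': "g integrable_on {a..y}" using gi xy by (auto intro: integrable_on_subinterval)
    have gixy: "g integrable_on {x..y}" using gi sxy by (auto intro: integrable_on_subinterval)
    have grxy: "(\<lambda>s. g s * poly r s) integrable_on {x..y}" using gr sxy by (auto intro: integrable_on_subinterval)
    have rWxy: "(\<lambda>u. poly r' u * W u) integrable_on {x..y}" using rW sxy by (auto intro: integrable_on_subinterval)
    have e1: "integral {a..y} (\<lambda>s. g s * poly r s) = integral {a..x} (\<lambda>s. g s * poly r s) + integral {x..y} (\<lambda>s. g s * poly r s)"
      using Henstock_Kurzweil_Integration.integral_combine[OF _ xy(1) gr'] xy by simp
    have e2: "integral {a..y} (\<lambda>u. poly r' u * W u) = integral {a..x} (\<lambda>u. poly r' u * W u) + integral {x..y} (\<lambda>u. poly r' u * W u)"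
      using Henstock_Kurzweil_Integration.integral_combine[OF _ xy(1) rW'] xy by simp
    have e3: "W y = W x + integral {x..y} g"
      unfolding W_def using Henstock_Kurzweil_Integration.integral_combine[OF _ xy(1) gi'] xy by simp
    have e4: "poly r y - poly r x = integral {x..y} (\<lambda>u. poly r' u)"
      using integral_poly[OF xy(1), of r r'] by (simp add: r'_def)
    have "\<Phi> y - \<Phi> x = integral {x..y} (\<lambda>s. g s * poly r s) - poly r y * integral {x..y} g
                 - W x * integral {x..y} (\<lambda>u. poly r' u) + integral {x..y} (\<lambda>u. poly r' u * W u)"
      unfolding \<Phi>_def e1 e2 e3 by (simp add: algebra_simps e4[symmetric])
    also have "\<dots> = integral {x..y} (\<lambda>s. g s * (poly r s - poly r y))
                 + integral {x..y} (\<lambda>u. poly r' u * (W u - W x))"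
    proof -
      have i1: "integral {x..y} (\<lambda>s. g s * (poly r s - poly r y)) =
                integral {x..y} (\<lambda>s. g s * poly r s) - poly r y * integral {x..y} g"
      proof -
        have "integral {x..y} (\<lambda>s. g s * poly r s - g s * poly r y) =
              integral {x..y} (\<lambda>s. g s * poly r s) - integral {x..y} (\<lambda>s. g s * poly r y)"
          by (rule integral_diff[OF grxy]) (rule integrable_on_mult_left[OF gixy])
        then show ?thesis by (simp add: right_diff_distrib mult.commute)
      qed
      have i2: "integral {x..y} (\<lambda>u. poly r' u * (W u - W x)) =
                integral {x..y} (\<lambda>u. poly r' u * W u) - W x * integral {x..y} (\<lambda>u. poly r' u)"
      proof -
        have "integral {x..y} (\<lambda>u. poly r' u * W u - poly r' u * W x) =
              integral {x..y} (\<lambda>u. poly r' u * W u) - integral {x..y} (\<lambda>u. poly r' u * W x)"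
          by (rule integral_diff[OF rWxy]) (rule integrable_on_mult_left[OF poly_integrable])
        then show ?thesis by (simp add: right_diff_distrib mult.commute)
      qed
      show ?thesis unfolding i1 i2 by simp
    qed
    finally have eq: "\<Phi> y - \<Phi> x = integral {x..y} (\<lambda>s. g s * (poly r s - poly r y))
                 + integral {x..y} (\<lambda>u. poly r' u * (W u - W x))" .
    have lip: "\<bar>poly r s - poly r y\<bar> \<le> L * (y - x)" if s: "s \<in> {x..y}" for s
    proof -
      have "poly r y - poly r s = integral {s..y} (\<lambda>u. poly r' u)"
        using integral_poly[of s y r r'] s by (simp add: r'_def)
      moreover have "\<bar>integral {s..y} (\<lambda>u. poly r' u)\<bar> \<le> L * (y - s)"
        using integral_bound[of s y "\<lambda>u. poly r' u" L] s sxy L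
        by (auto intro: continuous_on_poly[OF continuous_on_id])
      moreover have "L * (y - s) \<le> L * (y - x)" using s L0 by (intro mult_left_mono) auto
      ultimately show ?thesis by (simp add: abs_minus_commute)
    qed
    have b1: "\<bar>integral {x..y} (\<lambda>s. g s * (poly r s - poly r y))\<bar> \<le> integral {x..y} (\<lambda>s. \<bar>g s\<bar> * (L * (y - x)))"
    proof -
      have "norm (integral {x..y} (\<lambda>s. g s * (poly r s - poly r y))) \<le> integral {x..y} (\<lambda>s. \<bar>g s\<bar> * (L * (y - x)))"
      proof (rule integral_norm_bound_integral)
        show "(\<lambda>s. g s * (poly r s - poly r y)) integrable_on {x..y}"
        proof -
          have gxy: "g absolutely_integrable_on {x..y}"
            by (rule absolutely_integrable_on_subinterval[OF g sxy])
          have "continuous_on {x..y} (\<lambda>s. poly r s - poly r y)"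
            by (intro continuous_intros continuous_on_poly[OF continuous_on_id])
          from absint_mult_cont[OF gxy this] show ?thesis
            unfolding absolutely_integrable_on_def by blast
        qed
        show "(\<lambda>s. \<bar>g s\<bar> * (L * (y - x))) integrable_on {x..y}"
          using gai sxy by (auto intro!: integrable_on_mult_left intro: integrable_on_subinterval)
        show "norm (g s * (poly r s - poly r y)) \<le> \<bar>g s\<bar> * (L * (y - x))" if "s \<in> {x..y}" for s
          using lip[OF that] by (simp add: abs_mult mult_left_mono)
      qed
      then show ?thesis by simp
    qed
    have b1': "integral {x..y} (\<lambda>s. \<bar>g s\<bar> * (L * (y - x))) = (G y - G x) * (L * (y - x))"
    proof -
      have gay: "(\<lambda>s. \<bar>g s\<bar>) integrable_on {a..y}" using gai xy by (auto intro: integrable_on_subinterval)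
      have "G y = G x + integral {x..y} (\<lambda>s. \<bar>g s\<bar>)"
        unfolding G_def using Henstock_Kurzweil_Integration.integral_combine[OF _ xy(1) gay] xy by simp
      then show ?thesis by simp
    qed
    have b2: "\<bar>integral {x..y} (\<lambda>u. poly r' u * (W u - W x))\<bar> \<le> (L * \<eta>) * (y - x)"
    proof -
      have "norm (integral {x..y} (\<lambda>u. poly r' u * (W u - W x))) \<le> (L * \<eta>) * (y - x)"
      proof (rule integral_bound[OF xy(1)])
        show "continuous_on {x..y} (\<lambda>u. poly r' u * (W u - W x))"
          using Wc sxy by (auto intro!: continuous_intros continuous_on_poly[OF continuous_on_id]
              intro: continuous_on_subset)
        show "norm (poly r' u * (W u - W x)) \<le> L * \<eta>" if "u \<in> {x..y}" for u
          using L[of u] eta[OF that] that sxy L0 by (auto simp: abs_mult intro: mult_mono)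
      qed
      then show ?thesis by simp
    qed
    have "\<bar>\<Phi> y - \<Phi> x\<bar> \<le> (G y - G x) * (L * (y - x)) + (L * \<eta>) * (y - x)"
      using eq b1 b1' b2 by linarith
    also have "\<dots> = (y - x) * (L * (G y - G x) + L * \<eta>)" by (simp add: algebra_simps)
    finally show ?thesis .
  qed
  have dz: "(\<Phi> has_field_derivative 0) (at x within {a..b})" if x: "x \<in> {a..b}" for x
  proof (rule deriv0I)
    fix e :: real assume e: "e > 0"
    define e' where "e' = e / (3 * (L + 1))"
    have e': "e' > 0" using e L0 by (simp add: e'_def)
    have Le: "L * e' \<ge> 0" using L0 e' by simp
    have key: "3 * (L * e') \<le> e"
    proof -
      have "e' * (3 * (L + 1)) = e" using L0 by (simp add: e'_def)
      then show ?thesis using e' L0 by (simp add: algebra_simps)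
    qed
    obtain d1 where d1: "d1 > 0" "\<And>u. u \<in> {a..b} \<Longrightarrow> dist u x < d1 \<Longrightarrow> dist (G u) (G x) < e'"
      using Gc x e' unfolding continuous_on_iff by meson
    obtain d2 where d2: "d2 > 0" "\<And>u. u \<in> {a..b} \<Longrightarrow> dist u x < d2 \<Longrightarrow> dist (W u) (W x) < e'"
      using Wc x e' unfolding continuous_on_iff by meson
    show "\<exists>d>0. \<forall>y\<in>{a..b}. \<bar>y - x\<bar> < d \<longrightarrow> \<bar>\<Phi> y - \<Phi> x\<bar> \<le> e * \<bar>y - x\<bar>"
    proof (intro exI[of _ "min d1 d2"] conjI ballI impI)
      show "min d1 d2 > 0" using d1 d2 by simp
      fix y assume y: "y \<in> {a..b}" "\<bar>y - x\<bar> < min d1 d2"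
      have Wn: "\<bar>W u - W x\<bar> < e'" if "u \<in> {a..b}" "\<bar>u - x\<bar> \<le> \<bar>y - x\<bar>" for u
        using d2(2)[of u] that y by (simp add: dist_real_def)
      have Gy: "\<bar>G y - G x\<bar> < e'" using d1(2)[of y] y by (simp add: dist_real_def)
      show "\<bar>\<Phi> y - \<Phi> x\<bar> \<le> e * \<bar>y - x\<bar>"
      proof (cases "x \<le> y")
        case True
        have eta: "\<bar>W u - W x\<bar> \<le> e'" if "u \<in> {x..y}" for u
          using Wn[of u] that x y True by fastforce
        have "\<bar>\<Phi> y - \<Phi> x\<bar> \<le> (y - x) * (L * (G y - G x) + L * e')"
          by (rule core[OF True x y(1) eta])
        also have "\<dots> \<le> (y - x) * (L * e' + L * e')"
          using True Gy L0 by (intro mult_left_mono add_right_mono) auto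
        also have "\<dots> \<le> (y - x) * e" using True key Le by (intro mult_left_mono) auto
        finally show ?thesis using True by (simp add: mult.commute)
      next
        case False
        have Wy: "\<bar>W y - W x\<bar> < e'" using Wn[of y] y by simp
        have eta: "\<bar>W u - W y\<bar> \<le> 2 * e'" if "u \<in> {y..x}" for u
        proof -
          have "\<bar>W u - W x\<bar> < e'" using Wn[of u] that x y False by fastforce
          then show ?thesis using Wy by linarith
        qed
        have "\<bar>\<Phi> x - \<Phi> y\<bar> \<le> (x - y) * (L * (G x - G y) + L * (2 * e'))"
          using False by (intro core[OF _ y(1) x eta]) auto
        also have "\<dots> \<le> (x - y) * (L * e' + L * (2 * e'))"
          using False Gy L0 by (intro mult_left_mono add_right_mono) auto
        also have "\<dots> \<le> (x - y) * e" using False key Le by (intro mult_left_mono) auto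
        finally show ?thesis using False by (simp add: abs_minus_commute mult.commute)
      qed
    qed
  qed
  have cvx: "convex {a..b}" by (simp add: convex_real_interval)
  obtain c where c: "\<And>x. x \<in> {a..b} \<Longrightarrow> \<Phi> x = c"
    using has_field_derivative_zero_constant[OF cvx dz] by blast
  have "\<Phi> a = 0" by (simp add: \<Phi>_def W_def)
  then have "\<Phi> b = 0" using c[of a] c[of b] ab by simp
  then have "integral {a..b} (\<lambda>s. g s * poly r s) = poly r b * W b - integral {a..b} (\<lambda>u. poly r' u * W u)"
    by (simp add: \<Phi>_def)
  moreover have "integral {a..b} (\<lambda>u. poly r' u * W u) = integral {a..b} (\<lambda>u. poly (pderiv r) u * (w u - w a))"
    by (rule integral_cong) (simp add: Wd r'_def)
  moreover have "W b = w b - w a" using Wd[of b] ab by simp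
  ultimately show ?thesis by simp
qed

lemma deg_coeff:
  fixes r :: "real poly"
  assumes "q \<ge> 1"
  shows "degree r \<le> q - 1 \<longleftrightarrow> (\<forall>i\<ge>q. coeff r i = 0)"
proof
  assume "degree r \<le> q - 1"
  then show "\<forall>i\<ge>q. coeff r i = 0" using assms by (auto intro: coeff_eq_0)
next
  assume "\<forall>i\<ge>q. coeff r i = 0"
  then show "degree r \<le> q - 1" using assms by (intro degree_le) auto
qed

lemma part_strict:
  assumes "is_partition T N t" "i < j" "j \<le> N"
  shows "t i < t j"
  using assms(2,3)
proof (induction j)
  case 0 then show ?case by simp
next
  case (Suc j)
  have st: "t j < t (Suc j)" using assms(1) Suc.prems by (simp add: is_partition_def)
  show ?case
  proof (cases "i = j")
    case True then show ?thesis using st by simp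
  next
    case False
    then have "t i < t j" using Suc by simp
    then show ?thesis using st by simp
  qed
qed

lemma part_mono:
  assumes "is_partition T N t" "i \<le> j" "j \<le> N"
  shows "t i \<le> t j"
  using part_strict[OF assms(1), of i j] assms by (cases "i = j") auto

lemma part_bounds:
  assumes "is_partition T N t" "n \<in> {1..N}"
  shows "0 \<le> t (n - 1)" "t (n - 1) < t n" "t n \<le> T"
proof -
  have t0: "t 0 = 0" and tN: "t N = T" using assms(1) by (auto simp: is_partition_def)
  show "0 \<le> t (n - 1)" using part_mono[OF assms(1), of 0 "n - 1"] assms(2) t0 by auto
  show "t (n - 1) < t n" using part_strict[OF assms(1), of "n - 1" n] assms(2) by auto
  show "t n \<le> T" using part_mono[OF assms(1), of n N] assms(2) tN by auto
qed

definition idx :: "(nat \<Rightarrow> real) \<Rightarrow> real \<Rightarrow> nat" where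
  "idx t s = (LEAST n. 1 \<le> n \<and> s \<le> t n)"

lemma idx_props:
  assumes "is_partition T N t" "s \<in> {0..T}"
  shows "idx t s \<in> {1..N}" "s \<in> {t (idx t s - 1)..t (idx t s)}"
proof -
  have N1: "N \<ge> 1" and t0: "t 0 = 0" and tN: "t N = T" using assms(1) by (auto simp: is_partition_def)
  have ex: "1 \<le> N \<and> s \<le> t N" using N1 tN assms(2) by simp
  let ?m = "idx t s"
  have m1: "1 \<le> ?m \<and> s \<le> t ?m" unfolding idx_def by (rule LeastI[of _ N]) (rule ex)
  have mN: "?m \<le> N" unfolding idx_def by (rule Least_le) (rule ex)
  show "?m \<in> {1..N}" using m1 mN by simp
  have "t (?m - 1) \<le> s"
  proof (cases "?m = 1")
    case True then show ?thesis using t0 assms(2) by simp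
  next
    case False
    then have "?m - 1 < ?m" "1 \<le> ?m - 1" using m1 by auto
    then have "\<not> (1 \<le> ?m - 1 \<and> s \<le> t (?m - 1))"
      using not_less_Least[of "?m - 1" "\<lambda>n. 1 \<le> n \<and> s \<le> t n"] unfolding idx_def by blast
    then show ?thesis using \<open>1 \<le> ?m - 1\<close> by simp
  qed
  then show "s \<in> {t (?m - 1)..t ?m}" using m1 by simp
qed

lemma weak_props:
  assumes "weak_deriv_on T w g" "0 \<le> a" "a \<le> b" "b \<le> T"
  shows "g absolutely_integrable_on {a..b}"
    "\<And>x. x \<in> {a..b} \<Longrightarrow> w x = w a + integral {a..x} g"
proof -
  have gT: "g absolutely_integrable_on {0..T}" and wx: "\<And>x. x \<in> {0..T} \<Longrightarrow> w x = w 0 + integral {0..x} g"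
    using assms(1) unfolding weak_deriv_on_def by blast+
  show "g absolutely_integrable_on {a..b}"
    by (rule absolutely_integrable_on_subinterval[OF gT]) (use assms in auto)
  have gi: "g integrable_on {0..T}" using gT absolutely_integrable_on_def by blast
  fix x assume x: "x \<in> {a..b}"
  have gix: "g integrable_on {0..x}" by (rule integrable_on_subinterval[OF gi]) (use x assms in auto)
  have "integral {0..a} g + integral {a..x} g = integral {0..x} g"
    by (rule Henstock_Kurzweil_Integration.integral_combine[OF _ _ gix]) (use x assms in auto)
  moreover have "w x = w 0 + integral {0..x} g" by (rule wx) (use x assms in auto)
  moreover have "w a = w 0 + integral {0..a} g" by (rule wx) (use x assms in auto)
  ultimately show "w x = w a + integral {a..x} g" by linarith
qed

lemma weak_cont:
  assumes "weak_deriv_on T w g"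
  shows "continuous_on {0..T} w"
proof -
  have gT: "g absolutely_integrable_on {0..T}" and wx: "\<And>x. x \<in> {0..T} \<Longrightarrow> w x = w 0 + integral {0..x} g"
    using assms(1) unfolding weak_deriv_on_def by blast+
  have gi: "g integrable_on {0..T}" using gT absolutely_integrable_on_def by blast
  have "continuous_on {0..T} (\<lambda>x. w 0 + integral {0..x} g)"
    by (rule continuous_on_add[OF continuous_on_const indefinite_integral_continuous_1[OF gi]])
  then show ?thesis by (rule continuous_on_eq) (metis wx)
qed

lemma C0_bound:
  assumes "continuous_on {0..T} w" "s \<in> {0..T}"
  shows "\<bar>w s\<bar> \<le> C0norm T w"
proof -
  have "bounded (w ` {0..T})"
    by (intro compact_imp_bounded compact_continuous_image assms(1)) auto
  then obtain M where M: "\<And>x. x \<in> w ` {0..T} \<Longrightarrow> norm x \<le> M" unfolding bounded_iff by blast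
  have "bdd_above ((\<lambda>s. \<bar>w s\<bar>) ` {0..T})"
    by (rule bdd_aboveI2[where M=M]) (use M in force)
  then show ?thesis unfolding C0norm_def by (rule cSUP_upper[OF assms(2)])
qed

lemma deriv_int:
  fixes v g :: "real \<Rightarrow> real"
  assumes ab: "a < b" and vp: "\<And>s. s \<in> {a..b} \<Longrightarrow> v s = poly p s"
    and gr: "(\<lambda>s. g s * poly r s) integrable_on {a..b}"
  shows "integral {a..b} (\<lambda>s. (deriv v s - g s) * poly r s) =
         Iint a b (pderiv p * r) - integral {a..b} (\<lambda>s. g s * poly r s)"
proof -
  have "integral {a..b} (\<lambda>s. (deriv v s - g s) * poly r s) =
        integral {a..b} (\<lambda>s. poly (pderiv p * r) s - g s * poly r s)"
  proof (rule integral_spike[where S="{a,b}"])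
    fix s assume s: "s \<in> {a..b} - {a,b}"
    then have so: "s \<in> {a<..<b}" by auto
    have "(v has_field_derivative poly (pderiv p) s) (at s)"
    proof (rule has_field_derivative_transform_within_open[OF poly_DERIV[of p s] _ so])
      show "open {a<..<b}" by simp
      show "\<And>x. x \<in> {a<..<b} \<Longrightarrow> poly p x = v x" using vp by auto
    qed
    then have "deriv v s = poly (pderiv p) s" by (rule DERIV_imp_deriv)
    then show "poly (pderiv p * r) s - g s * poly r s = (deriv v s - g s) * poly r s"
      by (simp add: algebra_simps)
  next
    show "negligible {a, b}" by (rule negligible_finite) simp
  qed
  also have "\<dots> = integral {a..b} (\<lambda>s. poly (pderiv p * r) s) - integral {a..b} (\<lambda>s. g s * poly r s)"
    by (rule integral_diff[OF poly_integrable gr])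
  finally show ?thesis by (simp add: Iint_def)
qed

lemma degree_pint: "degree (pint p) \<le> Suc (degree p)"
  unfolding pint_def
  by (rule degree_sum_le) (auto intro: order_trans[OF degree_monom_le])

lemma gr_int:
  assumes "weak_deriv_on T w g" "0 \<le> a" "a \<le> b" "b \<le> T"
  shows "(\<lambda>s. g s * poly r s) integrable_on {a..b}"
  using absint_mult_cont[OF weak_props(1)[OF assms] continuous_on_poly[OF continuous_on_id]]
  unfolding absolutely_integrable_on_def by blast

lemma w_diff_bound:
  assumes "weak_deriv_on T w g" "u \<in> {0..T}" "a \<in> {0..T}"
  shows "\<bar>w u - w a\<bar> \<le> 2 * C0norm T w"
  using C0_bound[OF weak_cont[OF assms(1)] assms(2)] C0_bound[OF weak_cont[OF assms(1)] assms(3)]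
  by linarith

context ortho
begin

definition K :: real where "K = (\<Sum>k<q. (S k + D k) * S k / Nrm k)"

lemma K_nonneg: "K \<ge> 0"
  unfolding K_def using S_nonneg D_nonneg Nrm_pos
  by (intro sum_nonneg) (auto intro!: divide_nonneg_pos mult_nonneg_nonneg add_nonneg_nonneg)

lemma J_bound:
  assumes wd: "weak_deriv_on T w g" and ab: "0 \<le> a" "a < b" "b \<le> T"
  shows "\<bar>integral {a..b} (\<lambda>s. g s * poly (Bab a (b - a) k) s)\<bar> \<le> 2 * C0norm T w * (S k + D k)"
proof -
  define h where "h = b - a"
  have h: "h > 0" and bh: "b = a + h" using ab by (auto simp: h_def)
  define R where "R = Bab a h k"
  define W where "W = C0norm T w"
  have wc: "continuous_on {0..T} w" by (rule weak_cont[OF wd])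
  have wb: "\<bar>w u - w a\<bar> \<le> 2 * W" if "u \<in> {a..b}" for u
    unfolding W_def by (rule w_diff_bound[OF wd]) (use that ab in auto)
  have W0: "W \<ge> 0" using C0_bound[OF wc, of 0] ab unfolding W_def by auto
  have ib: "integral {a..b} (\<lambda>s. g s * poly R s) =
         poly R b * (w b - w a) - integral {a..b} (\<lambda>u. poly (pderiv R) u * (w u - w a))"
    using ibp[OF _ weak_props[OF wd ab(1) _ ab(3)]] ab by simp
  have b1: "\<bar>poly R b * (w b - w a)\<bar> \<le> S k * (2 * W)"
    unfolding abs_mult R_def bh
    using Bab_bounds(1)[OF h, of "a + h" a k] wb[of b] ab S_nonneg[of k] bh
    by (intro mult_mono) auto
  have b2: "\<bar>integral {a..b} (\<lambda>u. poly (pderiv R) u * (w u - w a))\<bar> \<le> (D k / h * (2 * W)) * (b - a)"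
  proof -
    have "norm (integral {a..b} (\<lambda>u. poly (pderiv R) u * (w u - w a))) \<le> (D k / h * (2 * W)) * (b - a)"
    proof (rule integral_bound)
      show "a \<le> b" using ab by simp
      have "continuous_on {a..b} w" by (rule continuous_on_subset[OF wc]) (use ab in auto)
      then show "continuous_on {a..b} (\<lambda>u. poly (pderiv R) u * (w u - w a))"
        by (intro continuous_intros continuous_on_poly[OF continuous_on_id])
      fix u assume u: "u \<in> {a..b}"
      have "\<bar>poly (pderiv R) u\<bar> \<le> D k / h"
        unfolding R_def by (rule Bab_bounds(2)[OF h]) (use u bh in simp)
      then show "norm (poly (pderiv R) u * (w u - w a)) \<le> D k / h * (2 * W)"
        unfolding real_norm_def abs_mult using wb[OF u] by (intro mult_mono) auto
    qed
    then show ?thesis by simp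
  qed
  have "(D k / h * (2 * W)) * (b - a) = 2 * W * D k" using h by (simp add: h_def)
  with ib b1 b2 have "\<bar>integral {a..b} (\<lambda>s. g s * poly R s)\<bar> \<le> S k * (2 * W) + 2 * W * D k"
    by (smt (verit))
  then show ?thesis by (simp add: R_def h_def W_def algebra_simps)
qed

end

context ortho
begin

lemma Ptau_local:
  assumes P: "is_Ptau q T N t w v" and pt: "is_partition T N t" and wd: "weak_deriv_on T w g"
    and n: "n \<in> {1..N}" and vp: "\<And>s. s \<in> {t (n - 1)..t n} \<Longrightarrow> v s = poly p s"
    and r: "\<And>i. i \<ge> q \<Longrightarrow> coeff r i = 0"
  shows "Iint (t (n - 1)) (t n) (pderiv p * r) = integral {t (n - 1)..t n} (\<lambda>s. g s * poly r s)"
proof -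
  note tb = part_bounds[OF pt n]
  have dr: "degree r \<le> q - 1" using deg_coeff[OF q1, of r] r by blast
  have "integral {t (n - 1)..t n} (\<lambda>s. (deriv v s - g s) * poly r s) = 0"
    using P wd n dr unfolding is_Ptau_def by blast
  moreover have "integral {t (n - 1)..t n} (\<lambda>s. (deriv v s - g s) * poly r s) =
      Iint (t (n - 1)) (t n) (pderiv p * r) - integral {t (n - 1)..t n} (\<lambda>s. g s * poly r s)"
    by (rule deriv_int[OF tb(2) vp gr_int[OF wd tb(1) _ tb(3)]]) (use tb in auto)
  ultimately show ?thesis by simp
qed

lemma Ptau_piece:
  assumes P: "is_Ptau q T N t w v" and n: "n \<in> {1..N}"
  obtains p where "degree p \<le> q" "\<And>s. s \<in> {t (n - 1)..t n} \<Longrightarrow> v s = poly p s"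
  using P n unfolding is_Ptau_def Vtau_def by blast

lemma Ptau_nodes:
  assumes P: "is_Ptau q T N t w v" and pt: "is_partition T N t" and wd: "weak_deriv_on T w g"
  shows "n \<le> N \<Longrightarrow> v (t n) = w (t n)"
proof (induction n)
  case 0
  have "t 0 = 0" using pt by (simp add: is_partition_def)
  moreover have "v 0 = w 0" using P by (simp add: is_Ptau_def)
  ultimately show ?case by simp
next
  case (Suc n)
  have n: "Suc n \<in> {1..N}" using Suc.prems by simp
  note tb = part_bounds[OF pt n]
  obtain p where dp: "degree p \<le> q" and vp: "\<And>s. s \<in> {t (Suc n - 1)..t (Suc n)} \<Longrightarrow> v s = poly p s"
    using Ptau_piece[OF P n] by blast
  have "Iint (t n) (t (Suc n)) (pderiv p * 1) = integral {t n..t (Suc n)} (\<lambda>s. g s * poly 1 s)"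
    using Ptau_local[OF P pt wd n vp, of 1] q1 by simp
  moreover have "Iint (t n) (t (Suc n)) (pderiv p) = poly p (t (Suc n)) - poly p (t n)"
    unfolding Iint_def by (rule integral_poly) (use tb in auto)
  moreover have "w (t (Suc n)) = w (t n) + integral {t n..t (Suc n)} g"
    using weak_props(2)[OF wd, of "t n" "t (Suc n)" "t (Suc n)"] tb by simp
  moreover have "v (t n) = poly p (t n)" "v (t (Suc n)) = poly p (t (Suc n))"
    using vp tb by auto
  moreover have "v (t n) = w (t n)" using Suc by simp
  ultimately show ?case by simp
qed

lemma Ptau_repr:
  assumes P: "is_Ptau q T N t w v" and pt: "is_partition T N t" and wd: "weak_deriv_on T w g"
    and n: "n \<in> {1..N}" and vp: "\<And>s. s \<in> {t (n - 1)..t n} \<Longrightarrow> v s = poly p s"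
    and s: "s \<in> {t (n - 1)..t n}"
  shows "v s = w (t (n - 1)) + Iint (t (n - 1)) s (pderiv p)"
proof -
  have "Iint (t (n - 1)) s (pderiv p) = poly p s - poly p (t (n - 1))"
    unfolding Iint_def by (rule integral_poly) (use s in auto)
  moreover have "n - 1 \<le> N" using n by auto
  then have "v (t (n - 1)) = w (t (n - 1))" by (rule Ptau_nodes[OF P pt wd])
  moreover have "v (t (n - 1)) = poly p (t (n - 1))" using vp s by auto
  moreover have "v s = poly p s" using vp s by auto
  ultimately show ?thesis by simp
qed

lemma coeff_pderiv_q:
  fixes p :: "real poly"
  assumes "degree p \<le> q" "i \<ge> q"
  shows "coeff (pderiv p) i = 0"
proof -
  have "degree (pderiv p) = degree p - 1" by (rule degree_pderiv)
  then have "degree (pderiv p) < i" using assms q1 by linarith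
  then show ?thesis by (rule coeff_eq_0)
qed

lemma Ptau_bound:
  assumes P: "is_Ptau q T N t w v" and pt: "is_partition T N t" and wd: "weak_deriv_on T w g"
    and s: "s \<in> {0..T}"
  shows "\<bar>v s\<bar> \<le> (1 + 2 * K) * C0norm T w"
proof -
  define n where "n = idx t s"
  have n: "n \<in> {1..N}" and sn: "s \<in> {t (n - 1)..t n}" using idx_props[OF pt s] by (auto simp: n_def)
  note tb = part_bounds[OF pt n]
  obtain p where dp: "degree p \<le> q" and vp: "\<And>s. s \<in> {t (n - 1)..t n} \<Longrightarrow> v s = poly p s"
    using Ptau_piece[OF P n] by blast
  define a where "a = t (n - 1)"
  define h where "h = t n - t (n - 1)"
  have h: "h > 0" using tb by (simp add: h_def)
  have ah: "a + h = t n" by (simp add: a_def h_def)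
  define W where "W = C0norm T w"
  have JB: "\<bar>Iint a (a + h) (pderiv p * Bab a h k)\<bar> \<le> (2 * W) * (S k + D k)" if k: "k < q" for k
  proof -
    have "Iint (t (n - 1)) (t n) (pderiv p * Bab a h k) = integral {t (n - 1)..t n} (\<lambda>s. g s * poly (Bab a h k) s)"
      by (rule Ptau_local[OF P pt wd n vp]) (use Bab_deg[OF h k, of a] k in \<open>auto intro!: coeff_eq_0\<close>)
    then have "Iint a (a + h) (pderiv p * Bab a h k) = integral {t (n - 1)..t n} (\<lambda>s. g s * poly (Bab a h k) s)"
      unfolding ah by (simp add: a_def)
    also have "\<bar>\<dots>\<bar> \<le> 2 * W * (S k + D k)"
      unfolding W_def using J_bound[OF wd tb] by (simp add: h_def a_def)
    finally show ?thesis by simp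
  qed
  have sa: "s \<in> {a..a + h}" unfolding ah using sn by (simp add: a_def)
  have "\<bar>Iint a s (pderiv p)\<bar> \<le> (2 * W) * K"
    unfolding K_def by (rule local_bound[OF h coeff_pderiv_q[OF dp] JB sa])
  moreover have "v s = w a + Iint a s (pderiv p)"
    unfolding a_def by (rule Ptau_repr[OF P pt wd n vp sn])
  moreover have "\<bar>w a\<bar> \<le> W" unfolding W_def
    by (rule C0_bound[OF weak_cont[OF wd]]) (use tb in \<open>auto simp: a_def\<close>)
  ultimately show ?thesis by (simp add: W_def algebra_simps)
qed

lemma Ptau_unique:
  assumes P1: "is_Ptau q T N t w v1" and P2: "is_Ptau q T N t w v2"
    and pt: "is_partition T N t" and wd: "weak_deriv_on T w g"
  shows "v1 = v2"
proof
  fix s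
  show "v1 s = v2 s"
  proof (cases "s \<in> {0..T}")
    case False
    then show ?thesis using P1 P2 by (simp add: is_Ptau_def)
  next
    case s: True
    define n where "n = idx t s"
    have n: "n \<in> {1..N}" and sn: "s \<in> {t (n - 1)..t n}" using idx_props[OF pt s] by (auto simp: n_def)
    note tb = part_bounds[OF pt n]
    obtain p1 where dp1: "degree p1 \<le> q" and vp1: "\<And>s. s \<in> {t (n - 1)..t n} \<Longrightarrow> v1 s = poly p1 s"
      using Ptau_piece[OF P1 n] by blast
    obtain p2 where dp2: "degree p2 \<le> q" and vp2: "\<And>s. s \<in> {t (n - 1)..t n} \<Longrightarrow> v2 s = poly p2 s"
      using Ptau_piece[OF P2 n] by blast
    have "pderiv p1 = pderiv p2"
    proof (rule local_unique[OF tb(2)])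
      show "\<And>i. q \<le> i \<Longrightarrow> coeff (pderiv p1) i = 0" by (rule coeff_pderiv_q[OF dp1])
      show "\<And>i. q \<le> i \<Longrightarrow> coeff (pderiv p2) i = 0" by (rule coeff_pderiv_q[OF dp2])
      fix r :: "real poly" assume r: "\<And>i. q \<le> i \<Longrightarrow> coeff r i = 0"
      show "Iint (t (n - 1)) (t n) (pderiv p1 * r) = Iint (t (n - 1)) (t n) (pderiv p2 * r)"
        using Ptau_local[OF P1 pt wd n vp1 r] Ptau_local[OF P2 pt wd n vp2 r] by simp
    qed
    then show ?thesis
      using Ptau_repr[OF P1 pt wd n vp1 sn] Ptau_repr[OF P2 pt wd n vp2 sn] by simp
  qed
qed

end

context ortho
begin

lemma Ptau_exists:
  assumes pt: "is_partition T N t" and wd: "weak_deriv_on T w g"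
  shows "\<exists>v. is_Ptau q T N t w v"
proof -
  define J where "J n r = integral {t (n - 1)..t n} (\<lambda>s. g s * poly r s)" for n r
  have ex: "\<exists>Q. n \<in> {1..N} \<longrightarrow> ((\<forall>i\<ge>q. coeff Q i = 0) \<and>
      (\<forall>r. (\<forall>i\<ge>q. coeff r i = 0) \<longrightarrow> Iint (t (n - 1)) (t n) (Q * r) = J n r))" for n
  proof (cases "n \<in> {1..N}")
    case False then show ?thesis by blast
  next
    case n: True
    note tb = part_bounds[OF pt n]
    define a where "a = t (n - 1)"
    define h where "h = t n - a"
    have h: "h > 0" using tb by (simp add: h_def a_def)
    have ah: "a + h = t n" by (simp add: h_def)
    have gi: "(\<lambda>s. g s * poly r s) integrable_on {t (n - 1)..t n}" for r
      by (rule gr_int[OF wd tb(1) _ tb(3)]) (use tb in simp)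
    have Jadd: "J n (p + r) = J n p + J n r" for p r
    proof -
      have e: "(\<lambda>s. g s * poly (p + r) s) = (\<lambda>s. g s * poly p s + g s * poly r s)"
        by (simp add: fun_eq_iff distrib_left)
      show ?thesis unfolding J_def e by (rule integral_add[OF gi gi])
    qed
    have Jsm: "J n (smult c p) = c * J n p" for c p
    proof -
      have e: "(\<lambda>s. g s * poly (smult c p) s) = (\<lambda>s. c * (g s * poly p s))"
        by (simp add: fun_eq_iff)
      show ?thesis unfolding J_def e by (rule integral_mult_right)
    qed
    have "\<exists>Q. (\<forall>i\<ge>q. coeff Q i = 0) \<and>
      (\<forall>r. (\<forall>i\<ge>q. coeff r i = 0) \<longrightarrow> Iint a (a + h) (Q * r) = J n r)"
      by (rule local_exist[OF h]) (rule Jadd, rule Jsm)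
    then show ?thesis unfolding ah unfolding a_def by blast
  qed
  obtain Qf where Qf: "\<forall>n. n \<in> {1..N} \<longrightarrow> ((\<forall>i\<ge>q. coeff (Qf n) i = 0) \<and>
      (\<forall>r. (\<forall>i\<ge>q. coeff r i = 0) \<longrightarrow> Iint (t (n - 1)) (t n) (Qf n * r) = J n r))"
  proof -
    have ex': "\<forall>n. \<exists>Q. n \<in> {1..N} \<longrightarrow> ((\<forall>i\<ge>q. coeff Q i = 0) \<and>
      (\<forall>r. (\<forall>i\<ge>q. coeff r i = 0) \<longrightarrow> Iint (t (n - 1)) (t n) (Q * r) = J n r))"
      by (intro allI) (rule ex)
    from choice[OF ex'] show ?thesis using that by blast
  qed
  have Qc: "\<And>n i. n \<in> {1..N} \<Longrightarrow> i \<ge> q \<Longrightarrow> coeff (Qf n) i = 0" using Qf by blast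
  have QJ: "\<And>n r. n \<in> {1..N} \<Longrightarrow> (\<And>i. i \<ge> q \<Longrightarrow> coeff r i = 0) \<Longrightarrow>
      Iint (t (n - 1)) (t n) (Qf n * r) = J n r" using Qf by blast
  define Pf where "Pf n = pint (Qf n) + [: w (t (n - 1)) - poly (pint (Qf n)) (t (n - 1)) :]" for n
  have dPf: "pderiv (Pf n) = Qf n" for n by (simp add: Pf_def pderiv_add pderiv_pint pderiv_pCons)
  have PfL: "poly (Pf n) (t (n - 1)) = w (t (n - 1))" for n by (simp add: Pf_def)
  have PfR: "poly (Pf n) (t n) = w (t n)" if n: "n \<in> {1..N}" for n
  proof -
    note tb = part_bounds[OF pt n]
    have "Iint (t (n - 1)) (t n) (Qf n * 1) = J n 1" by (rule QJ[OF n]) (use q1 in simp)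
    then have "Iint (t (n - 1)) (t n) (Qf n) = integral {t (n - 1)..t n} g" by (simp add: J_def)
    moreover have "Iint (t (n - 1)) (t n) (Qf n) = poly (Pf n) (t n) - poly (Pf n) (t (n - 1))"
      unfolding Iint_def by (rule integral_poly[OF _ dPf]) (use tb in simp)
    moreover have "w (t n) = w (t (n - 1)) + integral {t (n - 1)..t n} g"
      using weak_props(2)[OF wd tb(1) _ tb(3), of "t n"] tb by simp
    ultimately show ?thesis using PfL[of n] by simp
  qed
  have dgPf: "degree (Pf n) \<le> q" if n: "n \<in> {1..N}" for n
  proof -
    have "degree (Qf n) \<le> q - 1" using deg_coeff[OF q1, of "Qf n"] Qc[OF n] by blast
    then have "degree (pint (Qf n)) \<le> q" using degree_pint[of "Qf n"] q1 by linarith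
    then show ?thesis unfolding Pf_def by (intro degree_add_le) auto
  qed
  define v where "v s = (if s \<in> {0..T} then poly (Pf (idx t s)) s else 0)" for s
  have vrep: "v s = poly (Pf n) s" if n: "n \<in> {1..N}" and s: "s \<in> {t (n - 1)..t n}" for n s
  proof -
    note tb = part_bounds[OF pt n]
    have s0: "s \<in> {0..T}" using s tb by auto
    define m where "m = idx t s"
    have m: "m \<in> {1..N}" and sm: "s \<in> {t (m - 1)..t m}" using idx_props[OF pt s0] by (auto simp: m_def)
    have vs: "v s = poly (Pf m) s" using s0 by (simp add: v_def m_def)
    show ?thesis
    proof (cases "m = n")
      case True then show ?thesis using vs by simp
    next
      case False
      show ?thesis
      proof (cases "m < n")
        case True
        then have "t m \<le> t (n - 1)" using part_mono[OF pt, of m "n - 1"] n by auto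
        then have e1: "s = t m" and e2: "s = t (n - 1)" using s sm by auto
        have "poly (Pf m) s = w s" using PfR[OF m] e1 by simp
        moreover have "poly (Pf n) s = w s" using PfL[of n] e2 by simp
        ultimately show ?thesis using vs by simp
      next
        case False
        then have "n < m" using \<open>m \<noteq> n\<close> by simp
        then have "t n \<le> t (m - 1)" using part_mono[OF pt, of n "m - 1"] m by auto
        then have e1: "s = t n" and e2: "s = t (m - 1)" using s sm by auto
        have "poly (Pf m) s = w s" using PfL[of m] e2 by simp
        moreover have "poly (Pf n) s = w s" using PfR[OF n] e1 by simp
        ultimately show ?thesis using vs by simp
      qed
    qed
  qed
  have t0: "t 0 = 0" and tN: "t N = T" and N1: "N \<ge> 1" using pt by (auto simp: is_partition_def)
  have cont: "m \<le> N \<Longrightarrow> continuous_on {0..t m} v" for m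
  proof (induction m)
    case 0 then show ?case using t0 by simp
  next
    case (Suc m)
    have n: "Suc m \<in> {1..N}" using Suc.prems by simp
    note tb = part_bounds[OF pt n]
    have c1: "continuous_on {0..t m} v" using Suc by simp
    have "continuous_on {t m..t (Suc m)} (\<lambda>s. poly (Pf (Suc m)) s)"
      by (rule continuous_on_poly[OF continuous_on_id])
    then have c2: "continuous_on {t m..t (Suc m)} v"
      by (rule continuous_on_eq) (use vrep[OF n] in simp)
    have "continuous_on ({0..t m} \<union> {t m..t (Suc m)}) v"
      by (rule continuous_on_closed_Un[OF _ _ c1 c2]) auto
    moreover have "{0..t m} \<union> {t m..t (Suc m)} = {0..t (Suc m)}" using tb by auto
    ultimately show ?case by simp
  qed
  have Vt: "v \<in> Vtau q T N t"
    unfolding Vtau_def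
  proof (intro CollectI conjI ballI)
    show "continuous_on {0..T} v" using cont[of N] tN by simp
    fix n assume n: "n \<in> {1..N}"
    show "\<exists>p. degree p \<le> q \<and> (\<forall>s\<in>{t (n - 1)..t n}. v s = poly p s)"
      using dgPf[OF n] vrep[OF n] by blast
  qed
  have out: "\<forall>s. s \<notin> {0..T} \<longrightarrow> v s = 0" by (simp add: v_def)
  have v0: "v 0 = w 0"
  proof -
    have n1: "(1::nat) \<in> {1..N}" using N1 by simp
    have "0 \<le> t 1" using part_bounds[OF pt n1] by simp
    then have "v 0 = poly (Pf 1) 0" using vrep[OF n1, of 0] t0 by simp
    then show ?thesis using PfL[of 1] t0 by simp
  qed
  have orth: "integral {t (n - 1)..t n} (\<lambda>s. (deriv v s - g' s) * poly r s) = 0"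
    if wd': "weak_deriv_on T w g'" and n: "n \<in> {1..N}" and dr: "degree r \<le> q - 1" for g' n r
  proof -
    note tb = part_bounds[OF pt n]
    have rc: "\<And>i. i \<ge> q \<Longrightarrow> coeff r i = 0" using deg_coeff[OF q1, of r] dr by blast
    have "integral {t (n - 1)..t n} (\<lambda>s. (deriv v s - g' s) * poly r s) =
        Iint (t (n - 1)) (t n) (pderiv (Pf n) * r) - integral {t (n - 1)..t n} (\<lambda>s. g' s * poly r s)"
      by (rule deriv_int[OF tb(2) vrep[OF n] gr_int[OF wd' tb(1) _ tb(3)]]) (use tb in auto)
    also have "Iint (t (n - 1)) (t n) (pderiv (Pf n) * r) = integral {t (n - 1)..t n} (\<lambda>s. g s * poly r s)"
      unfolding dPf using QJ[OF n rc] by (simp add: J_def)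
    also have "integral {t (n - 1)..t n} (\<lambda>s. g s * poly r s) = integral {t (n - 1)..t n} (\<lambda>s. g' s * poly r s)"
    proof -
      have ab: "t (n - 1) \<le> t n" using tb by simp
      show ?thesis
        using ibp[OF ab weak_props[OF wd tb(1) ab tb(3)]] ibp[OF ab weak_props[OF wd' tb(1) ab tb(3)]]
        by simp
    qed
    finally show ?thesis by simp
  qed
  have "is_Ptau q T N t w v"
    unfolding is_Ptau_def using Vt out v0 orth by blast
  then show ?thesis by blast
qed

lemma main_bound:
  assumes pt: "is_partition T N t" and H: "H1 T w"
  shows "C0norm T (Ptau q T N t w) \<le> (1 + 2 * K) * C0norm T w"
proof -
  obtain g where wd: "weak_deriv_on T w g" using H by (auto simp: H1_def)
  obtain v where P: "is_Ptau q T N t w v" using Ptau_exists[OF pt wd] by blast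
  have "Ptau q T N t w = v"
    unfolding Ptau_def
  proof (rule the_equality[where P="is_Ptau q T N t w", OF P])
    fix v' assume "is_Ptau q T N t w v'"
    then show "v' = v" using Ptau_unique[OF _ P pt wd] by blast
  qed
  moreover have "C0norm T v \<le> (1 + 2 * K) * C0norm T w"
  proof -
    have "0 \<le> T" using pt part_mono[OF pt, of 0 N] by (simp add: is_partition_def)
    then have ne: "{0..T} \<noteq> {}" by simp
    show ?thesis unfolding C0norm_def
      by (rule cSUP_least[OF ne]) (rule Ptau_bound[OF P pt wd, unfolded C0norm_def])
  qed
  ultimately show ?thesis by simp
qed

end

theorem lemma4p2:
  fixes q :: nat
  assumes "q \<ge> 1"
  shows "\<exists>C>0. \<forall>T N t w. T > 0 \<longrightarrow> is_partition T N t \<longrightarrow> H1 T w \<longrightarrow>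
           C0norm T (Ptau q T N t w) \<le> C * C0norm T w"
proof -
  obtain B where B: "\<forall>k<q. degree (B k) = k \<and> B k \<noteq> 0"
    "\<forall>j<q. \<forall>k<q. j \<noteq> k \<longrightarrow> I01 (B j * B k) = 0"
    using gram_schmidt[of q] by blast
  have "\<forall>k. \<exists>L. \<forall>u\<in>{0..1}. \<bar>poly (B k) u\<bar> \<le> L"
    using poly_bounded by blast
  from choice[OF this] obtain S where S: "\<forall>k. \<forall>u\<in>{0..1}. \<bar>poly (B k) u\<bar> \<le> S k"
    by blast
  have "\<forall>k. \<exists>L. \<forall>u\<in>{0..1}. \<bar>poly (pderiv (B k)) u\<bar> \<le> L"
    using poly_bounded by blast
  from choice[OF this] obtain D where D: "\<forall>k. \<forall>u\<in>{0..1}. \<bar>poly (pderiv (B k)) u\<bar> \<le> D k"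
    by blast
  interpret Ort: ortho q B S D
  proof
    show "q \<ge> 1" by (rule assms)
    show "\<And>k. k < q \<Longrightarrow> degree (B k) = k" using B(1) by blast
    show "\<And>k. k < q \<Longrightarrow> B k \<noteq> 0" using B(1) by blast
    show "\<And>j k. j < q \<Longrightarrow> k < q \<Longrightarrow> j \<noteq> k \<Longrightarrow> I01 (B j * B k) = 0" using B(2) by blast
    show "\<And>k x. x \<in> {0..1} \<Longrightarrow> \<bar>poly (B k) x\<bar> \<le> S k" using S by blast
    show "\<And>k x. x \<in> {0..1} \<Longrightarrow> \<bar>poly (pderiv (B k)) x\<bar> \<le> D k" using D by blast
  qed
  show ?thesis
  proof (intro exI[of _ "1 + 2 * Ort.K"] conjI allI impI)
    show "0 < 1 + 2 * Ort.K" using Ort.K_nonneg by simp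
    fix T N t w assume "T > (0::real)" "is_partition T N t" "H1 T w"
    then show "C0norm T (Ptau q T N t w) \<le> (1 + 2 * Ort.K) * C0norm T w"
      using Ort.main_bound by blast
  qed
qed

end
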